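(* Let $L:\mathbb{R}\to\mathbb{R}_{+}$ be a convex loss function with $L(0)=0$. Suppose there is some $\epsilon>0$ such that $L$ is linear (affine) on the interval $(0,2+\epsilon)$. Then $L$ is Fisher consistent for binary classification; that is, for every random pair $(X,Y)$ with $Y\in\{-1,1\}$ and every feature value $\mathbf{x}$, writing $p:=\Pr(Y=1\mid \mathbf{x})$ and $q:=\Pr(Y=-1\mid \mathbf{x})$, \[ \operatorname*{arg\,min}_{z\in\mathbb{R}} \mathbf{E}_{Y\mid \mathbf{x}}\, L(1-Yz)=\operatorname*{arg\,min}_{z\in\mathbb{R}} \big(p\,L(1-z)+q\,L(1+z)\big)= f^{*}_{Bayes}(\mathbf{x}), \] where $f^{*}_{Bayes}(\mathbf{x})=1$ if $p>q$ and $f^{*}_{Bayes}(\mathbf{x})=-1$ if $p<q$.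
   Context: Binary classification setting: features $\mathbf{X}\in\mathcal{X}\subseteq\mathbb{R}^d$ and labels $Y\in\{-1,1\}$. The Bayes classifier is $f^{*}_{Bayes}(\mathbf{x})=1$ if $\Pr(Y=1\mid\mathbf{x})>\Pr(Y=-1\mid\mathbf{x})$ and $f^{*}_{Bayes}(\mathbf{x})=-1$ if $\Pr(Y=1\mid\mathbf{x})<\Pr(Y=-1\mid\mathbf{x})$. A loss function $L$ is called Fisher consistent (classification calibrated) if $\operatorname{arg\,min}_{f:\mathcal{X}\to\mathbb{R}}\mathbf{E}_{X,Y}L(1-Yf(\mathbf{X}))$ is solved by the Bayes classifier; in the binary (SVM) setting this holds when, for all $\mathbf{x}\in\mathcal{X}$, $\operatorname{arg\,min}_{z\in\mathbb{R}}\mathbf{E}_{Y\mid\mathbf{x}}L(1-Yz)=f^{*}_{Bayes}(\mathbf{x})$, which is the condition stated in the claim. *)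

theory Defs
  imports "HOL-Analysis.Analysis"
begin

definition cond_risk :: "(real \<Rightarrow> real) \<Rightarrow> real \<Rightarrow> real \<Rightarrow> real \<Rightarrow> real" where
  "cond_risk L p q z = p * L (1 - z) + q * L (1 + z)"

definition f_bayes :: "real \<Rightarrow> real \<Rightarrow> real" where
  "f_bayes p q = (if p > q then 1 else if p < q then -1 else undefined)"

end

theory Submission
  imports Defs
begin

theorem theorem1:
  fixes L :: "real \<Rightarrow> real" and \<epsilon> p q :: real
  assumes convex: "convex_on UNIV L"
    and nonneg: "\<And>t. L t \<ge> 0"
    and L0: "L 0 = 0"
    and eps: "\<epsilon> > 0"
    and lin: "\<exists>a b. \<forall>t \<in> {0<..<2 + \<epsilon>}. L t = a * t + b"
    and p: "0 \<le> p" "p \<le> 1"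
    and q: "q = 1 - p"
    and pq: "p \<noteq> q"
  shows "is_arg_min (cond_risk L p q) (\<lambda>_. True) (f_bayes p q)"
proof -
  obtain a b where ab: "\<And>t. t \<in> {0<..<2 + \<epsilon>} \<Longrightarrow> L t = a * t + b" using lin by blast
  have cont: "continuous_on UNIV L"
    using convex_on_continuous[OF open_UNIV convex] .
  hence "(L \<longlongrightarrow> L 0) (at_right 0)"
    by (meson continuous_on_def filterlim_at_split UNIV_I iso_tuple_UNIV_I tendsto_within_subset top_greatest continuous_on_imp_continuous_within continuous_within)
  hence l1: "(L \<longlongrightarrow> 0) (at_right 0)" using L0 by simp
  have ev: "eventually (\<lambda>t. L t = a * t + b) (at_right (0::real))"
    unfolding eventually_at_right_field
    by (rule exI[of _ "2 + \<epsilon>"]) (use eps ab in auto)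
  have "((\<lambda>t. a * t + b) \<longlongrightarrow> 0) (at_right (0::real))"
    using tendsto_cong[OF ev] l1 by simp
  moreover have "((\<lambda>t. a * t + b) \<longlongrightarrow> a * 0 + b) (at_right (0::real))"
    by (intro tendsto_intros)
  ultimately have b0: "b = 0"
    using tendsto_unique[OF trivial_limit_at_right_real] by fastforce
  have L1: "L 1 = a" and L2: "L 2 = 2 * a" using ab[of 1] ab[of 2] eps b0 by auto
  have a0: "a \<ge> 0" using nonneg[of 1] L1 by simp
  have lower: "L t \<ge> a * t" for t
  proof -
    consider "t < 0" | "t \<in> {0<..<2 + \<epsilon>}" | "t = 0" | "t \<ge> 2 + \<epsilon>" by force
    then show ?thesis
    proof cases
      case 1
      define u where "u = - t / (1 - t)"
      have u: "0 \<le> u" "u \<le> 1" using 1 by (auto simp: u_def field_simps)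
      have "(1 - u) *\<^sub>R t + u *\<^sub>R 1 = 0" using 1 by (simp add: u_def field_simps)
      hence "L 0 \<le> (1 - u) * L t + u * L 1"
        using convex_onD[OF convex u] by (metis UNIV_I)
      hence "0 \<le> (1 - t) * ((1 - u) * L t + u * a)" using L0 L1 1 by simp
      also have "\<dots> = L t - t * a"
      proof -
        have e1: "(1 - t) * (1 - u) = 1" using 1 by (simp add: u_def field_simps)
        have e2: "(1 - t) * u = - t" using 1 by (simp add: u_def field_simps)
        have "(1 - t) * ((1 - u) * L t + u * a) = ((1 - t) * (1 - u)) * L t + ((1 - t) * u) * a"
          by (simp add: algebra_simps)
        thus ?thesis using e1 e2 by simp
      qed
      finally show ?thesis by (simp add: mult.commute)
    next
      case 2 then show ?thesis using ab b0 by simp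
    next
      case 3 then show ?thesis using L0 by simp
    next
      case 4
      define u where "u = 1 / (t - 1)"
      have t: "t > 2" using 4 eps by simp
      have u: "0 \<le> u" "u \<le> 1" using t by (auto simp: u_def field_simps)
      have eu: "u * (t - 1) = 1" using t by (simp add: u_def)
      have "(1 - u) *\<^sub>R 1 + u *\<^sub>R t = 2"
      proof -
        have "(1 - u) *\<^sub>R 1 + u *\<^sub>R t = 1 + u * (t - 1)" by (simp add: algebra_simps)
        thus ?thesis using eu by simp
      qed
      hence "L 2 \<le> (1 - u) * L 1 + u * L t"
        using convex_onD[OF convex u] by (metis UNIV_I)
      hence "(t - 1) * (2 * a) \<le> (t - 1) * ((1 - u) * a + u * L t)" using L1 L2 t by simp
      also have "\<dots> = ((t - 1) - (t - 1) * u) * a + ((t - 1) * u) * L t" by (simp add: algebra_simps)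
      also have "\<dots> = (t - 2) * a + L t" using eu by (simp add: mult.commute)
      finally show ?thesis by (simp add: algebra_simps)
    qed
  qed
  show ?thesis
  proof (cases "p > q")
    case True
    have "cond_risk L p q 1 \<le> cond_risk L p q z" for z
    proof (cases "z \<le> 1")
      case True
      have "p * (a * (1 - z)) \<le> p * L (1 - z)" using lower p by (simp add: mult_left_mono)
      moreover have "q * (a * (1 + z)) \<le> q * L (1 + z)" using lower p q by (simp add: mult_left_mono)
      moreover have "q * (2 * a) \<le> p * (a * (1 - z)) + q * (a * (1 + z))"
      proof -
        have "0 \<le> a * ((p - q) * (1 - z))" using a0 True \<open>p > q\<close> by simp
        moreover have "p * (a * (1 - z)) + q * (a * (1 + z)) - q * (2 * a) = a * ((p - q) * (1 - z))"
          unfolding q by algebra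
        ultimately show ?thesis by linarith
      qed
      ultimately show ?thesis by (simp add: cond_risk_def L0 L2)
    next
      case False
      have "0 \<le> p * L (1 - z)" using nonneg p by simp
      moreover have "q * (a * (1 + z)) \<le> q * L (1 + z)" using lower p q by (simp add: mult_left_mono)
      moreover have "q * (2 * a) \<le> q * (a * (1 + z))"
      proof -
        have "a * 2 \<le> a * (1 + z)" using False a0 by (intro mult_left_mono) auto
        thus ?thesis using p q by (intro mult_left_mono) (auto simp: mult.commute[of 2])
      qed
      ultimately show ?thesis by (simp add: cond_risk_def L0 L2)
    qed
    then show ?thesis using True by (simp add: is_arg_min_def f_bayes_def not_less)
  next
    case False
    hence pq': "p < q" using pq by simp
    have "cond_risk L p q (-1) \<le> cond_risk L p q z" for z
    proof (cases "z \<ge> -1")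
      case True
      have "p * (a * (1 - z)) \<le> p * L (1 - z)" using lower p by (simp add: mult_left_mono)
      moreover have "q * (a * (1 + z)) \<le> q * L (1 + z)" using lower p q by (simp add: mult_left_mono)
      moreover have "p * (2 * a) \<le> p * (a * (1 - z)) + q * (a * (1 + z))"
      proof -
        have "0 \<le> a * ((q - p) * (1 + z))" using a0 True pq' by simp
        moreover have "p * (a * (1 - z)) + q * (a * (1 + z)) - p * (2 * a) = a * ((q - p) * (1 + z))"
          unfolding q by algebra
        ultimately show ?thesis by linarith
      qed
      ultimately show ?thesis by (simp add: cond_risk_def L0 L2)
    next
      case False
      have "0 \<le> q * L (1 + z)" using nonneg p q by simp
      moreover have "p * (a * (1 - z)) \<le> p * L (1 - z)" using lower p by (simp add: mult_left_mono)
      moreover have "p * (2 * a) \<le> p * (a * (1 - z))"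
      proof -
        have "a * 2 \<le> a * (1 - z)" using False a0 by (intro mult_left_mono) auto
        thus ?thesis using p q by (intro mult_left_mono) (auto simp: mult.commute[of 2])
      qed
      ultimately show ?thesis by (simp add: cond_risk_def L0 L2)
    qed
    then show ?thesis using pq' by (simp add: is_arg_min_def f_bayes_def not_less)
  qed
qed

end
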